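(* Under the standing assumptions below, for every $i\in P$ the sum $\sum_{r\in P,\ r<i} b_r$ is finite, where $b_r$ is the rank of the free $R$-module $M_r/D_r$.
   Context: Standing assumptions: $R$ is a principal ideal domain; $P$ is a lattice with a compatible abelian group structure ($(P,+,0)$ abelian group, $a\le b\Rightarrow a+c\le b+c$). $U_0=\{s\in P:s\ge 0\}$, $R[U_0]$ the monoid ring (finite sums $\sum c_st^s$, $c_s\in R$), graded by $\deg(ct^s)=s$. $M=\bigoplus_{a\in P}M_a$ is a $P$-graded $R[U_0]$-module (persistence module) that is graded projective, with each $M_a$ a finitely generated $R$-module. For $r\in P$, $D_r=\sum_{q<r}t^{\,r-q}M_q\subseteq M_r$ (sum of images of the structure maps from degrees $q<r$); $M_r/D_r$ is a free $R$-module and $b_r$ denotes its rank. *)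

theory Defs
  imports Main "HOL-Library.Extended_Nat"
begin

definition is_ideal :: "'r::comm_ring_1 set \<Rightarrow> bool" where
  "is_ideal I \<longleftrightarrow> 0 \<in> I \<and> (\<forall>x\<in>I. \<forall>y\<in>I. x + y \<in> I) \<and> (\<forall>r. \<forall>x\<in>I. r * x \<in> I)"

definition pid_ring :: "'r::idom itself \<Rightarrow> bool" where
  "pid_ring _ \<longleftrightarrow> (\<forall>I::'r set. is_ideal I \<longrightarrow> (\<exists>a. I = {a * x | x. True}))"

text \<open>A P-graded R[U_0]-module is given by R-submodules M a of an ambient R-module
  (scalar multiplication scale), together with the structure maps
  phi a b = multiplication by t^(b - a) : M a \<rightarrow> M b for a \<le> b.\<close>

definition persistence_module ::
  "('r::comm_ring_1 \<Rightarrow> 'm::ab_group_add \<Rightarrow> 'm) \<Rightarrow> ('p::{ordered_ab_group_add,lattice} \<Rightarrow> 'm set)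
    \<Rightarrow> ('p \<Rightarrow> 'p \<Rightarrow> 'm \<Rightarrow> 'm) \<Rightarrow> bool" where
  "persistence_module scale M phi \<longleftrightarrow>
     module scale \<and>
     (\<forall>a. module.subspace scale (M a)) \<and>
     (\<forall>a b. a \<le> b \<longrightarrow>
        (\<forall>x\<in>M a. phi a b x \<in> M b) \<and>
        (\<forall>x\<in>M a. \<forall>y\<in>M a. phi a b (x + y) = phi a b x + phi a b y) \<and>
        (\<forall>c. \<forall>x\<in>M a. phi a b (scale c x) = scale c (phi a b x))) \<and>
     (\<forall>a. \<forall>x\<in>M a. phi a a x = x) \<and>
     (\<forall>a b c. a \<le> b \<longrightarrow> b \<le> c \<longrightarrow> (\<forall>x\<in>M a. phi b c (phi a b x) = phi a c x))"

text \<open>The graded free R[U_0]-module with basis J, basis element j in degree deg j.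
  Its degree-a component consists of the finitely supported coefficient vectors
  supported on the j with deg j \<le> a (coefficient of t^(a - deg j) e_j); the
  structure maps are then inclusions.\<close>

definition free_comp :: "'j set \<Rightarrow> ('j \<Rightarrow> 'p::order) \<Rightarrow> 'p \<Rightarrow> ('j \<Rightarrow> 'r::zero) set" where
  "free_comp J deg a = {g. finite {j. g j \<noteq> 0} \<and> (\<forall>j. g j \<noteq> 0 \<longrightarrow> j \<in> J \<and> deg j \<le> a)}"

text \<open>Graded projective: a graded direct summand of a graded free module, i.e. there
  are graded (degree-preserving, R[U_0]-linear) maps iota : M \<rightarrow> F and pi : F \<rightarrow> M
  with pi \<circ> iota = id. Without loss of generality the basis is indexed by pairs
  (degree, element of M) (the canonical free cover).\<close>

definition graded_projective ::
  "('r::comm_ring_1 \<Rightarrow> 'm::ab_group_add \<Rightarrow> 'm) \<Rightarrow> ('p::{ordered_ab_group_add,lattice} \<Rightarrow> 'm set)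
    \<Rightarrow> ('p \<Rightarrow> 'p \<Rightarrow> 'm \<Rightarrow> 'm) \<Rightarrow> bool" where
  "graded_projective scale M phi \<longleftrightarrow>
    (\<exists>(J::('p \<times> 'm) set) (deg::'p \<times> 'm \<Rightarrow> 'p)
       (iota::'p \<Rightarrow> 'm \<Rightarrow> ('p \<times> 'm \<Rightarrow> 'r)) (pi::'p \<Rightarrow> ('p \<times> 'm \<Rightarrow> 'r) \<Rightarrow> 'm).
      (\<forall>a. (\<forall>x\<in>M a. iota a x \<in> free_comp J deg a) \<and>
           (\<forall>x\<in>M a. \<forall>y\<in>M a. iota a (x + y) = (\<lambda>j. iota a x j + iota a y j)) \<and>
           (\<forall>c. \<forall>x\<in>M a. iota a (scale c x) = (\<lambda>j. c * iota a x j)) \<and>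
           (\<forall>g\<in>free_comp J deg a. pi a g \<in> M a) \<and>
           (\<forall>g\<in>free_comp J deg a. \<forall>h\<in>free_comp J deg a. pi a (\<lambda>j. g j + h j) = pi a g + pi a h) \<and>
           (\<forall>c. \<forall>g\<in>free_comp J deg a. pi a (\<lambda>j. c * g j) = scale c (pi a g)) \<and>
           (\<forall>x\<in>M a. pi a (iota a x) = x)) \<and>
      (\<forall>a b. a \<le> b \<longrightarrow>
           (\<forall>x\<in>M a. iota b (phi a b x) = iota a x) \<and>
           (\<forall>g\<in>free_comp J deg a. pi b g = phi a b (pi a g))))"

definition fin_gen :: "('r::comm_ring_1 \<Rightarrow> 'm::ab_group_add \<Rightarrow> 'm) \<Rightarrow> 'm set \<Rightarrow> bool" where
  "fin_gen scale N \<longleftrightarrow> (\<exists>S. finite S \<and> S \<subseteq> N \<and> module.span scale S = N)"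

definition Dsub :: "('r::comm_ring_1 \<Rightarrow> 'm::ab_group_add \<Rightarrow> 'm) \<Rightarrow> ('p::order \<Rightarrow> 'm set)
    \<Rightarrow> ('p \<Rightarrow> 'p \<Rightarrow> 'm \<Rightarrow> 'm) \<Rightarrow> 'p \<Rightarrow> 'm set" where
  "Dsub scale M phi r = module.span scale (\<Union>q\<in>{q. q < r}. phi q r ` M q)"

text \<open>B \<subseteq> N maps to a basis of the quotient module N / D (elements of N represent
  cosets): the images generate N / D, and are linearly independent modulo D.\<close>

definition quot_basis :: "('r::comm_ring_1 \<Rightarrow> 'm::ab_group_add \<Rightarrow> 'm) \<Rightarrow> 'm set \<Rightarrow> 'm set \<Rightarrow> 'm set \<Rightarrow> bool" where
  "quot_basis scale N D B \<longleftrightarrow>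
     B \<subseteq> N \<and> N \<subseteq> module.span scale (D \<union> B) \<and>
     (\<forall>F c. finite F \<longrightarrow> F \<subseteq> B \<longrightarrow> (\<Sum>b\<in>F. scale (c b) b) \<in> D \<longrightarrow> (\<forall>b\<in>F. c b = 0))"

definition quot_free :: "('r::comm_ring_1 \<Rightarrow> 'm::ab_group_add \<Rightarrow> 'm) \<Rightarrow> 'm set \<Rightarrow> 'm set \<Rightarrow> bool" where
  "quot_free scale N D \<longleftrightarrow> (\<exists>B. quot_basis scale N D B)"

definition quot_rank :: "('r::comm_ring_1 \<Rightarrow> 'm::ab_group_add \<Rightarrow> 'm) \<Rightarrow> 'm set \<Rightarrow> 'm set \<Rightarrow> enat" where
  "quot_rank scale N D = (let B = (SOME B. quot_basis scale N D B) in
      if finite B then enat (card B) else \<infinity>)"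

definition bnum :: "('r::comm_ring_1 \<Rightarrow> 'm::ab_group_add \<Rightarrow> 'm) \<Rightarrow> ('p::order \<Rightarrow> 'm set)
    \<Rightarrow> ('p \<Rightarrow> 'p \<Rightarrow> 'm \<Rightarrow> 'm) \<Rightarrow> 'p \<Rightarrow> enat" where
  "bnum scale M phi r = quot_rank scale (M r) (Dsub scale M phi r)"

end

theory Submission
  imports Defs
begin

lemma dep_card:
  fixes scale :: "'r::idom \<Rightarrow> 'm::ab_group_add \<Rightarrow> 'm"
  assumes md: "module scale" and S: "finite S"
  shows "\<And>(I::'i set) f. finite I \<Longrightarrow> card S < card I \<Longrightarrow> (\<forall>k\<in>I. f k \<in> module.span scale S)
     \<Longrightarrow> \<exists>c. (\<Sum>k\<in>I. scale (c k) (f k)) = 0 \<and> (\<exists>k\<in>I. c k \<noteq> 0)"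
  using S
proof (induction S rule: finite_induct)
  case empty
  interpret module scale by (rule md)
  have "\<forall>k\<in>I. f k = 0" using empty by simp
  moreover from empty obtain k where "k \<in> I" by fastforce
  ultimately show ?case by (intro exI[of _ "\<lambda>_. 1"]) auto
next
  case (insert a S I f)
  interpret module scale by (rule md)
  have "\<forall>k\<in>I. \<exists>al. f k - scale al a \<in> span S"
    using insert.prems(3) span_breakdown_eq by blast
  then obtain al where al: "\<And>k. k \<in> I \<Longrightarrow> f k - scale (al k) a \<in> span S" by metis
  show ?case
  proof (cases "\<forall>k\<in>I. al k = 0")
    case True
    then have "\<forall>k\<in>I. f k \<in> span S" using al by force
    then show ?thesis using insert by auto
  next
    case False
    then obtain k1 where k1: "k1 \<in> I" "al k1 \<noteq> 0" by blast
    define I' where "I' = I - {k1}"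
    define g where "g k = scale (al k1) (f k) - scale (al k) (f k1)" for k
    have gs: "\<forall>k\<in>I'. g k \<in> span S"
    proof
      fix k assume "k \<in> I'"
      then have "k \<in> I" by (simp add: I'_def)
      have "g k = scale (al k1) (f k - scale (al k) a) - scale (al k) (f k1 - scale (al k1) a)"
        by (simp add: g_def algebra_simps mult.commute)
      then show "g k \<in> span S" using al[OF \<open>k \<in> I\<close>] al[OF k1(1)]
        by (simp add: span_diff span_scale)
    qed
    have cI': "card S < card I'" using insert k1 by (simp add: I'_def)
    obtain d where d: "(\<Sum>k\<in>I'. scale (d k) (g k)) = 0" "\<exists>k\<in>I'. d k \<noteq> 0"
      using insert.IH[OF _ cI' gs] insert.prems(1) I'_def by auto
    define c where "c k = (if k = k1 then - (\<Sum>k\<in>I'. d k * al k) else d k * al k1)" for k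
    have I: "I = insert k1 I'" "k1 \<notin> I'" "finite I'" using k1 insert.prems(1) by (auto simp: I'_def)
    have "(\<Sum>k\<in>I. scale (c k) (f k)) = scale (c k1) (f k1) + (\<Sum>k\<in>I'. scale (c k) (f k))"
      using I by simp
    also have "\<dots> = scale (c k1) (f k1) + (\<Sum>k\<in>I'. scale (d k * al k1) (f k))"
      using I(2) by (intro arg_cong2[where f="(+)"] refl sum.cong) (auto simp: c_def)
    also have "\<dots> = (\<Sum>k\<in>I'. scale (d k) (g k))"
      using I(2) by (simp add: c_def g_def scale_sum_left scale_right_diff_distrib sum_subtractf
          sum.distrib mult.commute)
    finally have "(\<Sum>k\<in>I. scale (c k) (f k)) = 0" using d by simp
    moreover have "\<exists>k\<in>I. c k \<noteq> 0" using d(2) k1(2) I by (auto simp: c_def)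
    ultimately show ?thesis by blast
  qed
qed

theorem theorem3p18:
  fixes scale :: "'r::idom \<Rightarrow> 'm::ab_group_add \<Rightarrow> 'm"
    and M :: "'p::{ordered_ab_group_add,lattice} \<Rightarrow> 'm set"
    and phi :: "'p \<Rightarrow> 'p \<Rightarrow> 'm \<Rightarrow> 'm"
    and i :: 'p
  assumes "pid_ring TYPE('r)"
    and "persistence_module scale M phi"
    and "graded_projective scale M phi"
    and "\<forall>a. fin_gen scale (M a)"
    and "\<forall>r. quot_free scale (M r) (Dsub scale M phi r)"
  shows "finite {r. r < i \<and> bnum scale M phi r \<noteq> 0} \<and> (\<forall>r. r < i \<longrightarrow> bnum scale M phi r \<noteq> \<infinity>)"
proof -
  have PM: "module scale \<and> (\<forall>a. module.subspace scale (M a)) \<and>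
     (\<forall>a b. a \<le> b \<longrightarrow> (\<forall>x\<in>M a. phi a b x \<in> M b))"
    using assms(2) unfolding persistence_module_def by simp
  have md: "module scale" using PM by simp
  have sub: "\<And>a. module.subspace scale (M a)" using PM by simp
  have phiM: "\<And>a b x. a \<le> b \<Longrightarrow> x \<in> M a \<Longrightarrow> phi a b x \<in> M b"
    using PM by simp
  interpret module scale by (rule md)
  obtain J :: "('p \<times> 'm) set" and deg :: "'p \<times> 'm \<Rightarrow> 'p" and iota :: "'p \<Rightarrow> 'm \<Rightarrow> ('p \<times> 'm \<Rightarrow> 'r)" and pi :: "'p \<Rightarrow> ('p \<times> 'm \<Rightarrow> 'r) \<Rightarrow> 'm" where
    P1a: "\<forall>a. (\<forall>x\<in>M a. iota a x \<in> free_comp J deg a) \<and>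
           (\<forall>x\<in>M a. \<forall>y\<in>M a. iota a (x + y) = (\<lambda>j. iota a x j + iota a y j)) \<and>
           (\<forall>c. \<forall>x\<in>M a. iota a (scale c x) = (\<lambda>j. c * iota a x j)) \<and>
           (\<forall>g\<in>free_comp J deg a. pi a g \<in> M a) \<and>
           (\<forall>g\<in>free_comp J deg a. \<forall>h\<in>free_comp J deg a. pi a (\<lambda>j. g j + h j) = pi a g + pi a h) \<and>
           (\<forall>c. \<forall>g\<in>free_comp J deg a. pi a (\<lambda>j. c * g j) = scale c (pi a g)) \<and>
           (\<forall>x\<in>M a. pi a (iota a x) = x)"
    and P2a: "\<forall>a b. a \<le> b \<longrightarrow>
           (\<forall>x\<in>M a. iota b (phi a b x) = iota a x) \<and>
           (\<forall>g\<in>free_comp J deg a. pi b g = phi a b (pi a g))"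
    using assms(3) unfolding graded_projective_def by (elim exE conjE) (rule that; assumption)
  note P1 = spec[OF P1a]
  have P2: "\<And>a b. a \<le> b \<Longrightarrow>
           (\<forall>x\<in>M a. iota b (phi a b x) = iota a x) \<and>
           (\<forall>g\<in>free_comp J deg a. pi b g = phi a b (pi a g))" using P2a by blast
  note iM = P1[THEN conjunct1, rule_format]
  note iadd = P1[THEN conjunct2, THEN conjunct1, rule_format]
  note iscale = P1[THEN conjunct2, THEN conjunct2, THEN conjunct1, rule_format]
  note piM = P1[THEN conjunct2, THEN conjunct2, THEN conjunct2, THEN conjunct1, rule_format]
  note piadd = P1[THEN conjunct2, THEN conjunct2, THEN conjunct2, THEN conjunct2, THEN conjunct1, rule_format]
  have iMd: "deg j \<le> a" if "x \<in> M a" "iota a x j \<noteq> 0" for x a j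
  proof -
    have "\<forall>j. iota a x j \<noteq> 0 \<longrightarrow> j \<in> J \<and> deg j \<le> a"
      using iM[OF that(1)] unfolding free_comp_def by (simp only: mem_Collect_eq) (rule conjunct2)
    then show ?thesis using that(2) by blast
  qed
  note piiota = P1[THEN conjunct2, THEN conjunct2, THEN conjunct2, THEN conjunct2, THEN conjunct2, THEN conjunct2, rule_format]
  define D where "D r = Dsub scale M phi r" for r
  define B where "B r = (SOME B. quot_basis scale (M r) (Dsub scale M phi r) B)" for r
  have QB: "quot_basis scale (M r) (D r) (B r)" for r
  proof -
    have "\<exists>B. quot_basis scale (M r) (Dsub scale M phi r) B" using assms(5) unfolding quot_free_def by blast
    from someI_ex[OF this] show ?thesis unfolding B_def D_def .
  qed
  note QI = QB[unfolded quot_basis_def, THEN conjunct2, THEN conjunct2, rule_format]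
  have BM: "B r \<subseteq> M r" for r using QB[of r] unfolding quot_basis_def by blast
  have iota0: "iota a 0 = (\<lambda>_. 0)" for a
  proof -
    have "iota a (0 + 0) = (\<lambda>j. iota a 0 j + iota a 0 j)"
      by (rule iadd[OF subspace_0[OF sub] subspace_0[OF sub]])
    then have e: "iota a 0 = (\<lambda>j. iota a 0 j + iota a 0 j)" by (simp only: add_0)
    show ?thesis
    proof
      fix j
      from fun_cong[OF e, of j] show "iota a 0 j = 0" by (simp only: add_cancel_right_right)
    qed
  qed
  have iota_sum: "finite F \<Longrightarrow> (\<forall>p\<in>F. x p \<in> M a) \<Longrightarrow>
      iota a (\<Sum>p\<in>F. scale (c p) (x p)) = (\<lambda>j. \<Sum>p\<in>F. c p * iota a (x p) j)" for F x a c
  proof (induction F rule: finite_induct)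
    case empty then show ?case by (simp add: iota0)
  next
    case (insert q F)
    have "(\<Sum>p\<in>F. scale (c p) (x p)) \<in> M a"
      using insert by (intro subspace_sum[OF sub] subspace_scale[OF sub]) auto
    moreover have "scale (c q) (x q) \<in> M a" using insert by (intro subspace_scale[OF sub]) auto
    ultimately show ?case using insert by (simp add: iadd iscale fun_eq_iff)
  qed
  have free0: "(\<lambda>_. 0::'r) \<in> free_comp J deg a" for a by (simp add: free_comp_def)
  have KD0: "finite T \<Longrightarrow> \<forall>h\<in>free_comp J deg r. {j. h j \<noteq> 0} \<subseteq> T \<and> (\<forall>j. h j \<noteq> 0 \<longrightarrow> deg j < r)
      \<longrightarrow> pi r h \<in> D r" for r and T :: "('p \<times> 'm) set"
  proof (induction T rule: finite_induct)
    case empty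
    have "pi r (\<lambda>j. 0 + 0) = pi r (\<lambda>_. 0) + pi r (\<lambda>_. 0)" by (rule piadd[OF free0 free0])
    then have "pi r (\<lambda>_. 0) = 0" by simp
    show ?case
    proof (intro ballI impI)
      fix h :: "'p \<times> 'm \<Rightarrow> 'r"
      assume "{j. h j \<noteq> 0} \<subseteq> {} \<and> (\<forall>j. h j \<noteq> 0 \<longrightarrow> deg j < r)"
      then have "h = (\<lambda>_. 0)" by auto
      then show "pi r h \<in> D r" using \<open>pi r (\<lambda>_. 0) = 0\<close> by (simp add: D_def Dsub_def span_zero)
    qed
  next
    case (insert j0 T)
    show ?case
    proof (intro ballI impI)
      fix h :: "'p \<times> 'm \<Rightarrow> 'r" assume h: "h \<in> free_comp J deg r" "{j. h j \<noteq> 0} \<subseteq> insert j0 T \<and> (\<forall>j. h j \<noteq> 0 \<longrightarrow> deg j < r)"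
      define h1 where "h1 = (\<lambda>j. if j = j0 then h j else 0)"
      define h2 where "h2 = (\<lambda>j. if j = j0 then 0 else h j)"
      have hs: "h = (\<lambda>j. h1 j + h2 j)" by (auto simp: h1_def h2_def fun_eq_iff)
      have h2f: "h2 \<in> free_comp J deg r" using h(1) unfolding free_comp_def h2_def
        by (auto elim: rev_finite_subset)
      have h1f: "h1 \<in> free_comp J deg r" using h(1) unfolding free_comp_def h1_def
        by (auto elim: rev_finite_subset)
      have "{j. h2 j \<noteq> 0} \<subseteq> T \<and> (\<forall>j. h2 j \<noteq> 0 \<longrightarrow> deg j < r)"
        using h(2) by (auto simp: h2_def)
      then have "pi r h2 \<in> D r" using insert.IH h2f by blast
      moreover have "pi r h1 \<in> D r"
      proof (cases "h j0 = 0")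
        case True
        then have "h1 = (\<lambda>_. 0)" by (auto simp: h1_def)
        moreover have "pi r (\<lambda>_. 0) \<in> D r" using insert.IH free0 by auto
        ultimately show ?thesis by simp
      next
        case False
        then have lt: "deg j0 < r" and j0J: "j0 \<in> J" using h False unfolding free_comp_def by blast+
        have "h1 \<in> free_comp J deg (deg j0)" using j0J unfolding free_comp_def h1_def by auto
        then have "pi r h1 = phi (deg j0) r (pi (deg j0) h1)" and "pi (deg j0) h1 \<in> M (deg j0)"
          using P2[of "deg j0" r] lt piM by auto
        then show ?thesis unfolding D_def Dsub_def using lt by (auto intro!: span_base)
      qed
      moreover have "pi r h = pi r h1 + pi r h2" using piadd[OF h1f h2f] hs by simp
      ultimately show "pi r h \<in> D r" unfolding D_def Dsub_def by (simp add: span_add)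
    qed
  qed
  have KD: "x \<in> M r \<Longrightarrow> (\<forall>j. iota r x j \<noteq> 0 \<longrightarrow> deg j < r) \<Longrightarrow> x \<in> D r" for x r
  proof -
    assume x: "x \<in> M r" "\<forall>j. iota r x j \<noteq> 0 \<longrightarrow> deg j < r"
    have f: "iota r x \<in> free_comp J deg r" using iM x by blast
    then have "finite {j. iota r x j \<noteq> 0}" by (simp add: free_comp_def)
    from KD0[OF this] f x have "pi r (iota r x) \<in> D r" by blast
    then show ?thesis using piiota x by metis
  qed
  define Sg where "Sg = Sigma {r. r < i} B"
  define v where "v p = phi (fst p) i (snd p)" for p
  have vM: "p \<in> Sg \<Longrightarrow> v p \<in> M i" for p
    unfolding Sg_def v_def by (auto intro!: phiM less_imp_le intro: subsetD[OF BM])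
  have IND: "finite F \<Longrightarrow> F \<subseteq> Sg \<Longrightarrow> (\<Sum>p\<in>F. scale (c p) (v p)) = 0 \<Longrightarrow> \<forall>p\<in>F. c p = 0" for F c
  proof (induction F rule: finite_psubset_induct)
    case (psubset F)
    show ?case
    proof (cases "F = {}")
      case True then show ?thesis by simp
    next
      case False
      obtain r0 where r0: "r0 \<in> fst ` F" "\<forall>b\<in>fst ` F. r0 \<le> b \<longrightarrow> r0 = b"
        using finite_has_maximal[of "fst ` F"] False psubset.hyps by auto
      define F0 where "F0 = {p\<in>F. fst p = r0}"
      have F0ne: "F0 \<noteq> {}" using r0(1) by (auto simp: F0_def)
      have fin0: "finite F0" using psubset.hyps by (simp add: F0_def)
      have pM: "p \<in> F \<Longrightarrow> snd p \<in> M (fst p) \<and> fst p \<le> i" for p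
      proof -
        assume "p \<in> F"
        then have "p \<in> Sg" using psubset.prems(1) by blast
        then have "snd p \<in> B (fst p)" "fst p < i" by (auto simp: Sg_def)
        then show ?thesis using BM[of "fst p"] by (auto simp: less_imp_le)
      qed
      have "iota i (\<Sum>p\<in>F. scale (c p) (v p)) = (\<lambda>j. \<Sum>p\<in>F. c p * iota i (v p) j)"
        using iota_sum[OF psubset.hyps] vM psubset.prems(1) by blast
      also have "\<dots> = (\<lambda>j. \<Sum>p\<in>F. c p * iota (fst p) (snd p) j)"
        using P2 pM by (auto simp: v_def intro!: sum.cong)
      finally have E: "\<And>j. (\<Sum>p\<in>F. c p * iota (fst p) (snd p) j) = 0"
        using psubset.prems(2) iota0 by (metis)
      define x where "x = (\<Sum>p\<in>F0. scale (c p) (snd p))"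
      have F0M: "p \<in> F0 \<Longrightarrow> snd p \<in> M r0" for p using pM by (auto simp: F0_def)
      have xM: "x \<in> M r0" unfolding x_def using F0M
        by (intro subspace_sum[OF sub] subspace_scale[OF sub]) auto
      have ix: "iota r0 x = (\<lambda>j. \<Sum>p\<in>F0. c p * iota r0 (snd p) j)"
        unfolding x_def using iota_sum[OF fin0] F0M by blast
      have "x \<in> D r0"
      proof (rule KD[OF xM], intro allI impI)
        fix j assume nz: "iota r0 x j \<noteq> 0"
        have "deg j \<le> r0" using iMd[OF xM nz] .
        moreover have "deg j \<noteq> r0"
        proof
          assume dj: "deg j = r0"
          have "(\<Sum>p\<in>F. c p * iota (fst p) (snd p) j) = (\<Sum>p\<in>F0. c p * iota (fst p) (snd p) j)"
          proof (rule sum.mono_neutral_right[OF psubset.hyps])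
            show "F0 \<subseteq> F" by (auto simp: F0_def)
            show "\<forall>p\<in>F - F0. c p * iota (fst p) (snd p) j = 0"
            proof
              fix p assume p: "p \<in> F - F0"
              show "c p * iota (fst p) (snd p) j = 0"
              proof (rule ccontr)
                assume "c p * iota (fst p) (snd p) j \<noteq> 0"
                then have "iota (fst p) (snd p) j \<noteq> 0" by auto
                then have "deg j \<le> fst p" using iMd pM[of p] p by blast
                then show False using r0(2) dj p by (auto simp: F0_def)
              qed
            qed
          qed
          also have "\<dots> = iota r0 x j" unfolding ix by (auto simp: F0_def intro!: sum.cong)
          finally show False using E nz by simp
        qed
        ultimately show "deg j < r0" by simp
      qed
      have inj: "inj_on snd F0" by (auto simp: F0_def inj_on_def prod_eq_iff)
      have "x = (\<Sum>b\<in>snd ` F0. scale (c (r0, b)) b)"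
        unfolding x_def sum.reindex[OF inj] by (auto simp: F0_def intro!: sum.cong)
      moreover have "snd ` F0 \<subseteq> B r0" using psubset.prems(1) by (auto simp: F0_def Sg_def)
      ultimately have c0: "\<forall>b\<in>snd ` F0. c (r0, b) = 0"
        using QI[of "snd ` F0" r0 "\<lambda>b. c (r0, b)"] \<open>x \<in> D r0\<close> fin0 by simp
      then have c0': "\<forall>p\<in>F0. c p = 0" by (force simp: F0_def)
      have "(\<Sum>p\<in>F. scale (c p) (v p)) = (\<Sum>p\<in>F - F0. scale (c p) (v p))"
        using c0' psubset.hyps by (intro sum.mono_neutral_right) (auto simp: F0_def)
      then have "(\<Sum>p\<in>F - F0. scale (c p) (v p)) = 0" using psubset.prems(2) by simp
      moreover have "F - F0 \<subset> F"
      proof -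
        obtain p where "p \<in> F0" using F0ne by blast
        then show ?thesis by (auto simp: F0_def)
      qed
      ultimately have "\<forall>p\<in>F - F0. c p = 0" using psubset.IH psubset.prems(1) by blast
      then show ?thesis using c0' by blast
    qed
  qed
  obtain S where S: "finite S" "module.span scale S = M i" using assms(4) unfolding fin_gen_def by blast
  have bound: "finite F \<Longrightarrow> F \<subseteq> Sg \<Longrightarrow> card F \<le> card S" for F
  proof (rule ccontr)
    assume F: "finite F" "F \<subseteq> Sg" "\<not> card F \<le> card S"
    then obtain c where "(\<Sum>k\<in>F. scale (c k) (v k)) = 0" "\<exists>k\<in>F. c k \<noteq> 0"
      using dep_card[OF md S(1), of F v] vM S(2) by force
    then show False using IND[OF F(1,2)] by blast
  qed
  have finSg: "finite Sg"
  proof (rule ccontr)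
    assume "infinite Sg"
    then obtain F where "F \<subseteq> Sg" "finite F" "card F = Suc (card S)"
      using infinite_arbitrarily_large by blast
    then show False using bound by fastforce
  qed
  have finB: "r < i \<Longrightarrow> finite (B r)" for r
  proof -
    assume "r < i"
    then have "B r \<subseteq> snd ` Sg" by (force simp: Sg_def)
    then show ?thesis using finSg finite_subset by blast
  qed
  have bn: "bnum scale M phi r = (if finite (B r) then enat (card (B r)) else \<infinity>)" for r
    by (simp add: bnum_def quot_rank_def B_def Let_def)
  have "{r. r < i \<and> bnum scale M phi r \<noteq> 0} \<subseteq> fst ` Sg"
  proof
    fix r assume r: "r \<in> {r. r < i \<and> bnum scale M phi r \<noteq> 0}"
    then have "B r \<noteq> {}" using bn[of r] by (auto simp: zero_enat_def)
    then obtain b where "b \<in> B r" by blast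
    then show "r \<in> fst ` Sg" using r by (force simp: Sg_def)
  qed
  then have "finite {r. r < i \<and> bnum scale M phi r \<noteq> 0}" using finSg finite_subset by blast
  moreover have "\<forall>r. r < i \<longrightarrow> bnum scale M phi r \<noteq> \<infinity>" using finB bn by simp
  ultimately show ?thesis by blast
qed

end
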